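(* Let $X$ be a real-valued random variable, let $Z\sim\mathcal{N}(0,1)$ be independent of $X$, and set $Y=X+Z$. Let $p\ge 1$. Then $$\min_{a\in\mathbb{R}}\mathbb{E}\big[|X-aY|^p\big]=\min_{a\in[0,1)}\mathbb{E}\big[|X-aY|^p\big].$$ *)

theory Defs
  imports "HOL-Probability.Probability"
begin

end

theory Submission
  imports Defs
begin

definition dphi :: "real \<Rightarrow> real \<Rightarrow> real" where
  "dphi p t = p * sgn t * \<bar>t\<bar> powr (p - 1)"

lemma tangent_pos:
  fixes p x y :: real
  assumes p: "p \<ge> 1" and x: "x > 0"
  shows "x powr p + p * x powr (p - 1) * (y - x) \<le> \<bar>y\<bar> powr p"
proof (cases "y \<le> 0")
  case True
  have xp: "x powr p = x powr (p - 1) * x"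
    using x by (simp add: powr_diff)
  have "x powr p + p * x powr (p - 1) * (y - x) = x powr (p - 1) * (x * (1 - p) + p * y)"
    unfolding xp by (simp add: algebra_simps)
  also have "\<dots> \<le> 0"
  proof (rule mult_nonneg_nonpos)
    have "x * (1 - p) \<le> 0" using x p by (intro mult_nonneg_nonpos) auto
    moreover have "p * y \<le> 0" using True p by (intro mult_nonneg_nonpos) auto
    ultimately show "x * (1 - p) + p * y \<le> 0" by linarith
  qed simp
  also have "0 \<le> \<bar>y\<bar> powr p" by simp
  finally show ?thesis .
next
  case False
  have "(\<lambda>t. t powr p) y - (\<lambda>t. t powr p) x \<ge> (p * x powr (p - 1)) * (y - x)"
  proof (rule convex_on_imp_above_tangent[where A = "{0<..}"])
    show "convex_on {0<..} (\<lambda>t. t powr p)" using p by (rule powr_convex)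
    show "connected {0::real<..}" by simp
    show "x \<in> interior {0<..}" using x by (simp add: interior_open)
    show "y \<in> {0<..}" using False by simp
    show "((\<lambda>t. t powr p) has_field_derivative p * x powr (p - 1)) (at x within {0<..})"
      using x by (auto intro!: derivative_eq_intros)
  qed
  then show ?thesis using False by simp
qed

lemma tangent:
  fixes p x y :: real
  assumes p: "p \<ge> 1"
  shows "\<bar>x\<bar> powr p + dphi p x * (y - x) \<le> \<bar>y\<bar> powr p"
proof (cases x "0::real" rule: linorder_cases)
  case less
  have "(-x) powr p + p * (-x) powr (p - 1) * ((-y) - (-x)) \<le> \<bar>-y\<bar> powr p"
    using p less by (intro tangent_pos) auto
  then show ?thesis using less by (simp add: dphi_def algebra_simps)
next
  case equal
  then show ?thesis by (simp add: dphi_def)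
next
  case greater
  then show ?thesis using tangent_pos[OF p greater, of y] by (simp add: dphi_def)
qed

lemma convex_abs_powr:
  fixes p :: real assumes p: "p \<ge> 1"
  shows "convex_on UNIV (\<lambda>t. \<bar>t\<bar> powr p)"
proof (rule convex_onI)
  fix t x y :: real assume t: "0 < t" "t < 1"
  define z where "z = (1 - t) * x + t * y"
  have 1: "\<bar>z\<bar> powr p + dphi p z * (x - z) \<le> \<bar>x\<bar> powr p" by (rule tangent[OF p])
  have 2: "\<bar>z\<bar> powr p + dphi p z * (y - z) \<le> \<bar>y\<bar> powr p" by (rule tangent[OF p])
  have "(1 - t) * (x - z) + t * (y - z) = 0" by (simp add: z_def algebra_simps)
  then have "(1 - t) * (dphi p z * (x - z)) + t * (dphi p z * (y - z)) = 0"
    by (metis (no_types, lifting) distrib_left mult.left_commute mult_zero_right)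
  then have "\<bar>z\<bar> powr p \<le> (1 - t) * \<bar>x\<bar> powr p + t * \<bar>y\<bar> powr p"
    using mult_left_mono[OF 1, of "1 - t"] mult_left_mono[OF 2, of t] t
    by (simp add: algebra_simps)
  then show "\<bar>(1 - t) *\<^sub>R x + t *\<^sub>R y\<bar> powr p \<le> (1 - t) * \<bar>x\<bar> powr p + t * \<bar>y\<bar> powr p"
    by (simp add: z_def)
qed simp

lemma powr_sum_le:
  fixes p u v :: real assumes p: "p \<ge> 1"
  shows "\<bar>u + v\<bar> powr p \<le> 2 powr p * (\<bar>u\<bar> powr p + \<bar>v\<bar> powr p)"
proof -
  have "\<bar>u + v\<bar> \<le> 2 * max \<bar>u\<bar> \<bar>v\<bar>" by auto
  then have "\<bar>u + v\<bar> powr p \<le> (2 * max \<bar>u\<bar> \<bar>v\<bar>) powr p"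
    using p by (intro powr_mono2) auto
  also have "\<dots> = 2 powr p * max \<bar>u\<bar> \<bar>v\<bar> powr p" by (simp add: powr_mult)
  also have "max \<bar>u\<bar> \<bar>v\<bar> powr p \<le> \<bar>u\<bar> powr p + \<bar>v\<bar> powr p"
    by (cases "\<bar>u\<bar> \<le> \<bar>v\<bar>") (auto simp: max_def)
  finally show ?thesis by (simp add: mult_left_mono)
qed

lemma powr_le_1_plus:
  fixes p q t :: real assumes "0 \<le> q" "q \<le> p"
  shows "\<bar>t\<bar> powr q \<le> 1 + \<bar>t\<bar> powr p"
proof (cases "\<bar>t\<bar> \<le> 1")
  case True
  then have "\<bar>t\<bar> powr q \<le> 1" using assms by (simp add: powr_le1)
  then show ?thesis by (smt (verit) powr_ge_zero)
next
  case False
  then have "\<bar>t\<bar> powr q \<le> \<bar>t\<bar> powr p" using assms by (intro powr_mono) auto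
  then show ?thesis by simp
qed

lemma dphi_bound: "p \<ge> 1 \<Longrightarrow> \<bar>dphi p t\<bar> \<le> p * (1 + \<bar>t\<bar> powr p)"
  unfolding dphi_def abs_mult
  using powr_le_1_plus[of "p - 1" p t]
  by (cases "t = 0") (auto simp: intro!: mult_left_mono)

lemma dphi_young: "p \<ge> 1 \<Longrightarrow> \<bar>dphi p t * y\<bar> \<le> p * (\<bar>t\<bar> powr p + \<bar>y\<bar> powr p)"
proof -
  assume p: "p \<ge> 1"
  have "\<bar>t\<bar> powr (p - 1) * \<bar>y\<bar> \<le> \<bar>t\<bar> powr p + \<bar>y\<bar> powr p"
  proof (cases "\<bar>y\<bar> \<le> \<bar>t\<bar>")
    case True
    then have "\<bar>t\<bar> powr (p - 1) * \<bar>y\<bar> \<le> \<bar>t\<bar> powr (p - 1) * \<bar>t\<bar>" by (simp add: mult_left_mono)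
    also have "\<dots> = \<bar>t\<bar> powr p" using True
      by (cases "t = 0") (auto simp: powr_diff)
    finally show ?thesis by (smt (verit) powr_ge_zero)
  next
    case False
    then have "\<bar>t\<bar> powr (p - 1) * \<bar>y\<bar> \<le> \<bar>y\<bar> powr (p - 1) * \<bar>y\<bar>"
      using p by (intro mult_right_mono powr_mono2) auto
    also have "\<dots> = \<bar>y\<bar> powr p" using False
      by (cases "y = 0") (auto simp: powr_diff)
    finally show ?thesis by (smt (verit) powr_ge_zero)
  qed
  then show ?thesis using p unfolding dphi_def abs_mult
    by (cases "t = 0") (auto intro!: mult_left_mono simp: mult.assoc)
qed

lemma dphi_times_self: "dphi p t * t = p * \<bar>t\<bar> powr p"
  unfolding dphi_def
  by (cases "t = 0") (auto simp: powr_diff sgn_if)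

lemma dphi_minus: "dphi p (- t) = - dphi p t"
  by (simp add: dphi_def)

lemma dphi_cont: "t \<noteq> 0 \<Longrightarrow> isCont (dphi p) t"
  unfolding dphi_def
  by (auto intro!: continuous_intros isCont_sgn)


locale thm_setup = prob_space M for M :: "'s measure" +
  fixes X Z :: "'s \<Rightarrow> real" and p :: real
  assumes Xm[measurable]: "X \<in> borel_measurable M"
    and D: "distributed M lborel Z std_normal_density"
    and I: "indep_var borel X borel Z"
    and p: "p \<ge> 1"
    and iX: "integrable M (\<lambda>\<omega>. \<bar>X \<omega>\<bar> powr p)"
begin

lemma Zm[measurable]: "Z \<in> borel_measurable M"
  using distributed_measurable[OF D] by simp

lemma dens_nonneg: "0 \<le> std_normal_density x"
  by (rule normal_density_nonneg)

lemma intZp: "integrable M (\<lambda>\<omega>. \<bar>Z \<omega>\<bar> powr p)"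
proof -
  define n where "n = nat \<lceil>p\<rceil>"
  have n1: "n \<ge> 1" "p \<le> real n" using p by (auto simp: n_def) linarith
  have "integrable lborel (\<lambda>x. std_normal_density x * \<bar>x\<bar> powr p)"
  proof (rule Bochner_Integration.integrable_bound)
    show "integrable lborel (\<lambda>x. std_normal_density x * \<bar>x\<bar> ^ 0 + std_normal_density x * \<bar>x\<bar> ^ n)"
      by (rule Bochner_Integration.integrable_add[OF integrable_std_normal_moment_abs integrable_std_normal_moment_abs])
    show "(\<lambda>x. std_normal_density x * \<bar>x\<bar> powr p) \<in> borel_measurable lborel" by measurable
    show "AE x in lborel. norm (std_normal_density x * \<bar>x\<bar> powr p)
        \<le> norm (std_normal_density x * \<bar>x\<bar> ^ 0 + std_normal_density x * \<bar>x\<bar> ^ n)"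
    proof (rule AE_I2)
      fix x :: real
      have "\<bar>x\<bar> powr p \<le> 1 + \<bar>x\<bar> powr real n" using n1 p by (intro powr_le_1_plus) auto
      also have "\<bar>x\<bar> powr real n = \<bar>x\<bar> ^ n" using n1
        by (cases "x = 0") (auto simp: powr_realpow)
      finally have "\<bar>x\<bar> powr p \<le> 1 + \<bar>x\<bar> ^ n" .
      then have "std_normal_density x * \<bar>x\<bar> powr p \<le> std_normal_density x * (1 + \<bar>x\<bar> ^ n)"
        using dens_nonneg by (rule mult_left_mono)
      then show "norm (std_normal_density x * \<bar>x\<bar> powr p)
        \<le> norm (std_normal_density x * \<bar>x\<bar> ^ 0 + std_normal_density x * \<bar>x\<bar> ^ n)"
        using dens_nonneg[of x] by (simp add: algebra_simps)
    qed
  qed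
  then show ?thesis
    using distributed_integrable[OF D, of "\<lambda>z. \<bar>z\<bar> powr p"] dens_nonneg by simp
qed

lemma int_of_powr:
  assumes "integrable M (\<lambda>\<omega>. \<bar>W \<omega>\<bar> powr p)" and [measurable]: "W \<in> borel_measurable M"
  shows "integrable M W"
proof (rule Bochner_Integration.integrable_bound)
  show "integrable M (\<lambda>\<omega>. 1 + \<bar>W \<omega>\<bar> powr p)" using assms by auto
  show "AE x in M. norm (W x) \<le> norm (1 + \<bar>W x\<bar> powr p)"
  proof (rule AE_I2)
    fix x
    have "\<bar>W x\<bar> powr 1 \<le> 1 + \<bar>W x\<bar> powr p" using p by (intro powr_le_1_plus) auto
    then show "norm (W x) \<le> norm (1 + \<bar>W x\<bar> powr p)" by simp
  qed
qed simp

lemma intX: "integrable M X" by (rule int_of_powr[OF iX Xm])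
lemma intZ: "integrable M Z" by (rule int_of_powr[OF intZp Zm])

lemma intLin: "integrable M (\<lambda>\<omega>. \<bar>c * X \<omega> + d * Z \<omega>\<bar> powr p)"
proof (rule Bochner_Integration.integrable_bound)
  show "integrable M (\<lambda>\<omega>. 2 powr p * (\<bar>c\<bar> powr p * \<bar>X \<omega>\<bar> powr p + \<bar>d\<bar> powr p * \<bar>Z \<omega>\<bar> powr p))"
    using iX intZp by auto
  show "AE x in M. norm (\<bar>c * X x + d * Z x\<bar> powr p)
     \<le> norm (2 powr p * (\<bar>c\<bar> powr p * \<bar>X x\<bar> powr p + \<bar>d\<bar> powr p * \<bar>Z x\<bar> powr p))"
  proof (rule AE_I2)
    fix x
    show "norm (\<bar>c * X x + d * Z x\<bar> powr p)
     \<le> norm (2 powr p * (\<bar>c\<bar> powr p * \<bar>X x\<bar> powr p + \<bar>d\<bar> powr p * \<bar>Z x\<bar> powr p))"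
      using powr_sum_le[OF p, of "c * X x" "d * Z x"] by (simp add: abs_mult powr_mult)
  qed
qed simp

definition F :: "real \<Rightarrow> real" where
  "F a = (\<integral>\<omega>. \<bar>X \<omega> - a * (X \<omega> + Z \<omega>)\<bar> powr p \<partial>M)"

lemma intF: "integrable M (\<lambda>\<omega>. \<bar>X \<omega> - a * (X \<omega> + Z \<omega>)\<bar> powr p)"
  using intLin[of "1 - a" "- a"] by (simp add: algebra_simps)

lemma F_convex: "convex_on UNIV F"
proof (rule convex_onI)
  fix t x y :: real assume t: "0 < t" "t < 1"
  have "F ((1 - t) *\<^sub>R x + t *\<^sub>R y) \<le>
     (\<integral>\<omega>. (1 - t) * \<bar>X \<omega> - x * (X \<omega> + Z \<omega>)\<bar> powr p + t * \<bar>X \<omega> - y * (X \<omega> + Z \<omega>)\<bar> powr p \<partial>M)"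
    unfolding F_def
  proof (intro integral_mono intF)
    show "integrable M (\<lambda>\<omega>. (1 - t) * \<bar>X \<omega> - x * (X \<omega> + Z \<omega>)\<bar> powr p + t * \<bar>X \<omega> - y * (X \<omega> + Z \<omega>)\<bar> powr p)"
      using intF by auto
    fix \<omega>
    have "\<bar>(1 - t) *\<^sub>R (X \<omega> - x * (X \<omega> + Z \<omega>)) + t *\<^sub>R (X \<omega> - y * (X \<omega> + Z \<omega>))\<bar> powr p
      \<le> (1 - t) * \<bar>X \<omega> - x * (X \<omega> + Z \<omega>)\<bar> powr p + t * \<bar>X \<omega> - y * (X \<omega> + Z \<omega>)\<bar> powr p"
      using convex_onD[OF convex_abs_powr[OF p], of t] t by auto
    moreover have "(1 - t) *\<^sub>R (X \<omega> - x * (X \<omega> + Z \<omega>)) + t *\<^sub>R (X \<omega> - y * (X \<omega> + Z \<omega>))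
       = X \<omega> - ((1 - t) *\<^sub>R x + t *\<^sub>R y) * (X \<omega> + Z \<omega>)"
      by (simp add: algebra_simps)
    ultimately show "\<bar>X \<omega> - ((1 - t) *\<^sub>R x + t *\<^sub>R y) * (X \<omega> + Z \<omega>)\<bar> powr p
      \<le> (1 - t) * \<bar>X \<omega> - x * (X \<omega> + Z \<omega>)\<bar> powr p + t * \<bar>X \<omega> - y * (X \<omega> + Z \<omega>)\<bar> powr p"
      by simp
  qed
  also have "\<dots> = (1 - t) * F x + t * F y"
    unfolding F_def using intF by simp
  finally show "F ((1 - t) *\<^sub>R x + t *\<^sub>R y) \<le> (1 - t) * F x + t * F y" .
qed simp

lemma F_cont: "continuous_on UNIV F"
  by (rule convex_on_continuous[OF open_UNIV F_convex])

lemma EZ: "expectation Z = 0"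
proof -
  have "(\<integral>x. std_normal_density x * x \<partial>lborel) = expectation Z"
    using distributed_integral[OF D, of "\<lambda>x. x"] dens_nonneg by simp
  moreover have "(\<integral>x. std_normal_density x * x \<partial>lborel) = 0"
    using integral_std_normal_moment_odd[of 0] by simp
  ultimately show ?thesis by simp
qed

lemma indep_prod_Z:
  assumes [measurable]: "g \<in> borel_measurable borel" and ig: "integrable M (\<lambda>\<omega>. g (X \<omega>))"
  shows "(\<integral>\<omega>. g (X \<omega>) * Z \<omega> \<partial>M) = 0" and "integrable M (\<lambda>\<omega>. g (X \<omega>) * Z \<omega>)"
proof -
  have "indep_var borel (g \<circ> X) borel (id \<circ> Z)"
    by (rule indep_var_compose[OF I]) auto
  then have "indep_var borel (\<lambda>\<omega>. g (X \<omega>)) borel Z" by (simp add: comp_def id_def)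
  then have "(\<integral>\<omega>. g (X \<omega>) * Z \<omega> \<partial>M) = (\<integral>\<omega>. g (X \<omega>) \<partial>M) * expectation Z"
    using ig intZ by (rule indep_var_lebesgue_integral)
  then show "(\<integral>\<omega>. g (X \<omega>) * Z \<omega> \<partial>M) = 0" using EZ by simp
  show "integrable M (\<lambda>\<omega>. g (X \<omega>) * Z \<omega>)"
    using \<open>indep_var borel (\<lambda>\<omega>. g (X \<omega>)) borel Z\<close> ig intZ by (rule indep_var_integrable)
qed

lemma F_neg: assumes a: "a < 0" shows "F 0 \<le> F a"
proof -
  have dm[measurable]: "dphi p \<in> borel_measurable borel" unfolding dphi_def by measurable
  have idp: "integrable M (\<lambda>\<omega>. dphi p ((1 - a) * X \<omega>))"
  proof (rule Bochner_Integration.integrable_bound)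
    show "integrable M (\<lambda>\<omega>. p * (1 + \<bar>1 - a\<bar> powr p * \<bar>X \<omega>\<bar> powr p))" using iX by auto
    show "AE x in M. norm (dphi p ((1 - a) * X x)) \<le> norm (p * (1 + \<bar>1 - a\<bar> powr p * \<bar>X x\<bar> powr p))"
    proof (rule AE_I2)
      fix x
      show "norm (dphi p ((1 - a) * X x)) \<le> norm (p * (1 + \<bar>1 - a\<bar> powr p * \<bar>X x\<bar> powr p))"
        using dphi_bound[OF p, of "(1 - a) * X x"] p by (simp add: abs_mult powr_mult)
    qed
  qed simp
  have "(\<integral>\<omega>. \<bar>(1 - a) * X \<omega>\<bar> powr p + (- a) * (dphi p ((1 - a) * X \<omega>) * Z \<omega>) \<partial>M) \<le> F a"
    unfolding F_def
  proof (intro integral_mono intF)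
    show "integrable M (\<lambda>\<omega>. \<bar>(1 - a) * X \<omega>\<bar> powr p + (- a) * (dphi p ((1 - a) * X \<omega>) * Z \<omega>))"
      using intLin[of "1 - a" 0] indep_prod_Z(2)[of "\<lambda>x. dphi p ((1 - a) * x)"] idp
      by auto
    fix \<omega>
    show "\<bar>(1 - a) * X \<omega>\<bar> powr p + (- a) * (dphi p ((1 - a) * X \<omega>) * Z \<omega>) \<le> \<bar>X \<omega> - a * (X \<omega> + Z \<omega>)\<bar> powr p"
      using tangent[OF p, of "(1 - a) * X \<omega>" "X \<omega> - a * (X \<omega> + Z \<omega>)"]
      by (simp add: algebra_simps)
  qed
  moreover have "(\<integral>\<omega>. \<bar>(1 - a) * X \<omega>\<bar> powr p + (- a) * (dphi p ((1 - a) * X \<omega>) * Z \<omega>) \<partial>M)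
      = (1 - a) powr p * (\<integral>\<omega>. \<bar>X \<omega>\<bar> powr p \<partial>M)"
  proof -
    have "(\<integral>\<omega>. dphi p ((1 - a) * X \<omega>) * Z \<omega> \<partial>M) = 0"
      using indep_prod_Z(1)[of "\<lambda>x. dphi p ((1 - a) * x)"] idp by simp
    moreover have "integrable M (\<lambda>\<omega>. dphi p ((1 - a) * X \<omega>) * Z \<omega>)"
      using indep_prod_Z(2)[of "\<lambda>x. dphi p ((1 - a) * x)"] idp by simp
    moreover have feq: "(\<lambda>\<omega>. \<bar>(1 - a) * X \<omega>\<bar> powr p) = (\<lambda>\<omega>. (1 - a) powr p * \<bar>X \<omega>\<bar> powr p)"
      using a by (auto simp: abs_mult powr_mult)
    moreover have "expectation (\<lambda>\<omega>. \<bar>(1 - a) * X \<omega>\<bar> powr p) = (1 - a) powr p * expectation (\<lambda>\<omega>. \<bar>X \<omega>\<bar> powr p)"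
      by (subst feq) simp
    ultimately show ?thesis
      using iX by (simp add: Bochner_Integration.integral_add)
  qed
  moreover have "1 \<le> (1 - a) powr p" using a p by (intro ge_one_powr_ge_zero) auto
  moreover have "0 \<le> (\<integral>\<omega>. \<bar>X \<omega>\<bar> powr p \<partial>M)" by simp
  moreover have "F 0 = (\<integral>\<omega>. \<bar>X \<omega>\<bar> powr p \<partial>M)" by (simp add: F_def)
  ultimately show ?thesis
    using mult_right_mono[of 1 "(1 - a) powr p" "(\<integral>\<omega>. \<bar>X \<omega>\<bar> powr p \<partial>M)"] by linarith
qed


lemma dm[measurable]: "dphi p \<in> borel_measurable borel" unfolding dphi_def by measurable

lemma AE_Z_nz: "AE \<omega> in M. Z \<omega> \<noteq> 0"
proof (rule AE_I'[of "Z -` {0} \<inter> space M"])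
  show "{\<omega> \<in> space M. \<not> Z \<omega> \<noteq> 0} \<subseteq> Z -` {0} \<inter> space M" by auto
  have e: "emeasure M (Z -` {0} \<inter> space M) = (\<integral>\<^sup>+x. ennreal (std_normal_density x) * indicator {0} x \<partial>lborel)"
    by (rule distributed_emeasure[OF D]) simp
  have "AE x in lborel. ennreal (std_normal_density x) * indicator {0} x = 0"
    using AE_lborel_singleton[of "0::real"] by eventually_elim simp
  then have "(\<integral>\<^sup>+x. ennreal (std_normal_density x) * indicator {0} x \<partial>lborel) = 0"
    by (subst nn_integral_0_iff_AE) auto
  with e show "Z -` {0} \<inter> space M \<in> null_sets M"
    by (auto simp: null_sets_def)
qed

lemma EZp_pos: "0 < (\<integral>\<omega>. \<bar>Z \<omega>\<bar> powr p \<partial>M)"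
proof -
  have "0 \<le> (\<integral>\<omega>. \<bar>Z \<omega>\<bar> powr p \<partial>M)" by simp
  moreover have "(\<integral>\<omega>. \<bar>Z \<omega>\<bar> powr p \<partial>M) \<noteq> 0"
  proof
    assume "(\<integral>\<omega>. \<bar>Z \<omega>\<bar> powr p \<partial>M) = 0"
    then have "AE \<omega> in M. \<bar>Z \<omega>\<bar> powr p = 0"
      using integral_nonneg_eq_0_iff_AE[OF intZp] by simp
    with AE_Z_nz have "AE \<omega> in M. False" by eventually_elim simp
    then show False by simp
  qed
  ultimately show ?thesis by linarith
qed

lemma int_dphiZ: "integrable M (\<lambda>\<omega>. dphi p (Z \<omega>))"
proof (rule Bochner_Integration.integrable_bound)
  show "integrable M (\<lambda>\<omega>. p * (1 + \<bar>Z \<omega>\<bar> powr p))" using intZp by auto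
  show "AE x in M. norm (dphi p (Z x)) \<le> norm (p * (1 + \<bar>Z x\<bar> powr p))"
    using dphi_bound[OF p] p by (intro AE_I2) (smt (verit) real_norm_def powr_ge_zero)
qed simp

lemma E_dphiZ: "expectation (\<lambda>\<omega>. dphi p (Z \<omega>)) = 0"
proof -
  define f where "f x = std_normal_density x * dphi p x" for x
  have "(\<integral>x. f x \<partial>lborel) = expectation (\<lambda>\<omega>. dphi p (Z \<omega>))"
    unfolding f_def using distributed_integral[OF D, of "dphi p"] dens_nonneg by simp
  moreover have "(\<integral>x. f x \<partial>lborel) = \<bar>-1\<bar> *\<^sub>R (\<integral>x. f (0 + (-1) * x) \<partial>lborel)"
    by (rule lborel_integral_real_affine) simp
  moreover have "(\<lambda>x. f (0 + (-1) * x)) = (\<lambda>x. - f x)"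
    by (auto simp: f_def dphi_minus std_normal_density_def)
  ultimately show ?thesis by simp
qed

lemma E_dphiZ_X: "(\<integral>\<omega>. dphi p (Z \<omega>) * X \<omega> \<partial>M) = 0"
  and int_dphiZ_X: "integrable M (\<lambda>\<omega>. dphi p (Z \<omega>) * X \<omega>)"
proof -
  have "indep_var borel (id \<circ> X) borel (dphi p \<circ> Z)"
    by (rule indep_var_compose[OF I]) auto
  then have ind: "indep_var borel X borel (\<lambda>\<omega>. dphi p (Z \<omega>))" by (simp add: comp_def id_def)
  have "(\<integral>\<omega>. X \<omega> * dphi p (Z \<omega>) \<partial>M) = expectation X * expectation (\<lambda>\<omega>. dphi p (Z \<omega>))"
    using ind intX int_dphiZ by (rule indep_var_lebesgue_integral)
  then show "(\<integral>\<omega>. dphi p (Z \<omega>) * X \<omega> \<partial>M) = 0" using E_dphiZ by (simp add: mult.commute)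
  have "integrable M (\<lambda>\<omega>. X \<omega> * dphi p (Z \<omega>))"
    using ind intX int_dphiZ by (rule indep_var_integrable)
  then show "integrable M (\<lambda>\<omega>. dphi p (Z \<omega>) * X \<omega>)" by (simp add: mult.commute)
qed

lemma F_strict: "\<exists>b. 0 < b \<and> b \<le> 1 \<and> F (1 - b) < F 1"
proof -
  define Y where "Y \<omega> = X \<omega> + Z \<omega>" for \<omega>
  have Ym[measurable]: "Y \<in> borel_measurable M" unfolding Y_def by measurable
  have iYp: "integrable M (\<lambda>\<omega>. \<bar>Y \<omega>\<bar> powr p)" using intLin[of 1 1] by (simp add: Y_def)
  define b where "b n = inverse (real (Suc n))" for n
  have b: "0 < b n" "b n \<le> 1" for n by (auto simp: b_def field_simps)
  have blim: "b \<longlonglongrightarrow> 0" unfolding b_def by (rule LIMSEQ_inverse_real_of_nat)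
  define s where "s n \<omega> = (\<bar>Z \<omega>\<bar> powr p - \<bar>Z \<omega> - b n * Y \<omega>\<bar> powr p) / b n" for n \<omega>
  define f where "f \<omega> = dphi p (Z \<omega>) * Y \<omega>" for \<omega>
  define w where "w \<omega> = 2 * p * (2 powr p * (\<bar>Z \<omega>\<bar> powr p + \<bar>Y \<omega>\<bar> powr p) + \<bar>Y \<omega>\<bar> powr p)" for \<omega>
  have up: "s n \<omega> \<le> f \<omega>" for n \<omega>
  proof -
    have "\<bar>Z \<omega>\<bar> powr p + dphi p (Z \<omega>) * ((Z \<omega> - b n * Y \<omega>) - Z \<omega>) \<le> \<bar>Z \<omega> - b n * Y \<omega>\<bar> powr p"
      by (rule tangent[OF p])
    then have "\<bar>Z \<omega>\<bar> powr p - \<bar>Z \<omega> - b n * Y \<omega>\<bar> powr p \<le> b n * f \<omega>"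
      by (simp add: f_def algebra_simps)
    then show ?thesis using b[of n] by (simp add: s_def divide_le_eq mult.commute)
  qed
  have lo: "dphi p (Z \<omega> - b n * Y \<omega>) * Y \<omega> \<le> s n \<omega>" for n \<omega>
  proof -
    have "\<bar>Z \<omega> - b n * Y \<omega>\<bar> powr p + dphi p (Z \<omega> - b n * Y \<omega>) * (Z \<omega> - (Z \<omega> - b n * Y \<omega>)) \<le> \<bar>Z \<omega>\<bar> powr p"
      by (rule tangent[OF p])
    then have "b n * (dphi p (Z \<omega> - b n * Y \<omega>) * Y \<omega>) \<le> \<bar>Z \<omega>\<bar> powr p - \<bar>Z \<omega> - b n * Y \<omega>\<bar> powr p"
      by (simp add: algebra_simps)
    then show ?thesis using b[of n] by (simp add: s_def le_divide_eq mult.commute)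
  qed
  have sumb: "\<bar>t\<bar> powr p \<le> 2 powr p * (\<bar>Z \<omega>\<bar> powr p + \<bar>Y \<omega>\<bar> powr p)" if "\<bar>t\<bar> \<le> \<bar>Z \<omega>\<bar> + \<bar>Y \<omega>\<bar>" for t \<omega>
  proof -
    have "\<bar>t\<bar> powr p \<le> \<bar>\<bar>Z \<omega>\<bar> + \<bar>Y \<omega>\<bar>\<bar> powr p" using that p by (intro powr_mono2) auto
    also have "\<dots> \<le> 2 powr p * (\<bar>\<bar>Z \<omega>\<bar>\<bar> powr p + \<bar>\<bar>Y \<omega>\<bar>\<bar> powr p)" by (rule powr_sum_le[OF p])
    finally show ?thesis by simp
  qed
  have bound: "norm (s n \<omega>) \<le> w \<omega>" for n \<omega>
  proof -
    have "\<bar>Z \<omega> - b n * Y \<omega>\<bar> \<le> \<bar>Z \<omega>\<bar> + \<bar>Y \<omega>\<bar>"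
    proof -
      have "\<bar>b n * Y \<omega>\<bar> \<le> \<bar>Y \<omega>\<bar>" using b[of n] by (auto simp: abs_mult intro: mult_left_le_one_le)
      then show ?thesis by linarith
    qed
    then have A: "\<bar>dphi p (Z \<omega> - b n * Y \<omega>) * Y \<omega>\<bar> \<le> p * (2 powr p * (\<bar>Z \<omega>\<bar> powr p + \<bar>Y \<omega>\<bar> powr p) + \<bar>Y \<omega>\<bar> powr p)"
      using dphi_young[OF p, of "Z \<omega> - b n * Y \<omega>" "Y \<omega>"] sumb[of "Z \<omega> - b n * Y \<omega>" \<omega>] p
      by (smt (verit) mult_left_mono)
    have B: "\<bar>f \<omega>\<bar> \<le> p * (2 powr p * (\<bar>Z \<omega>\<bar> powr p + \<bar>Y \<omega>\<bar> powr p) + \<bar>Y \<omega>\<bar> powr p)"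
      using dphi_young[OF p, of "Z \<omega>" "Y \<omega>"] sumb[of "Z \<omega>" \<omega>] p unfolding f_def
      by (smt (verit) mult_left_mono)
    have "0 \<le> p * (2 powr p * (\<bar>Z \<omega>\<bar> powr p + \<bar>Y \<omega>\<bar> powr p) + \<bar>Y \<omega>\<bar> powr p)"
      using p by simp
    then show ?thesis using A B up[of n \<omega>] lo[of \<omega> n] unfolding w_def real_norm_def abs_le_iff
      by linarith
  qed
  have lim: "AE \<omega> in M. (\<lambda>n. s n \<omega>) \<longlonglongrightarrow> f \<omega>"
    using AE_Z_nz
  proof eventually_elim
    fix \<omega> assume nz: "Z \<omega> \<noteq> 0"
    have "(\<lambda>n. Z \<omega> - b n * Y \<omega>) \<longlonglongrightarrow> Z \<omega> - 0 * Y \<omega>"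
      by (intro tendsto_intros blim)
    then have "(\<lambda>n. dphi p (Z \<omega> - b n * Y \<omega>)) \<longlonglongrightarrow> dphi p (Z \<omega>)"
      using isCont_tendsto_compose[OF dphi_cont[OF nz]] by simp
    then have L: "(\<lambda>n. dphi p (Z \<omega> - b n * Y \<omega>) * Y \<omega>) \<longlonglongrightarrow> f \<omega>"
      unfolding f_def by (intro tendsto_intros)
    show "(\<lambda>n. s n \<omega>) \<longlonglongrightarrow> f \<omega>"
      by (intro tendsto_sandwich[OF _ _ L tendsto_const]) (simp_all add: up lo)
  qed
  have intw: "integrable M w" unfolding w_def using intZp iYp by auto
  have conv: "(\<lambda>n. integral\<^sup>L M (s n)) \<longlonglongrightarrow> integral\<^sup>L M f"
  proof (rule integral_dominated_convergence[OF _ _ intw lim])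
    show "f \<in> borel_measurable M" unfolding f_def by measurable
    show "s n \<in> borel_measurable M" for n unfolding s_def by measurable
    show "AE x in M. norm (s n x) \<le> w x" for n using bound by simp
  qed
  have "integral\<^sup>L M f = (\<integral>\<omega>. dphi p (Z \<omega>) * X \<omega> \<partial>M) + (\<integral>\<omega>. dphi p (Z \<omega>) * Z \<omega> \<partial>M)"
    unfolding f_def Y_def distrib_left
    using int_dphiZ_X intZp by (intro Bochner_Integration.integral_add) (auto simp: dphi_times_self)
  also have "\<dots> = p * (\<integral>\<omega>. \<bar>Z \<omega>\<bar> powr p \<partial>M)"
    using E_dphiZ_X by (simp add: dphi_times_self)
  finally have "0 < integral\<^sup>L M f" using EZp_pos p by simp
  from order_tendstoD(1)[OF conv this] obtain n where n: "0 < integral\<^sup>L M (s n)"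
    by (auto simp: eventually_sequentially)
  have iZb: "integrable M (\<lambda>\<omega>. \<bar>Z \<omega> - b n * Y \<omega>\<bar> powr p)"
    using intLin[of "- b n" "1 - b n"] by (simp add: Y_def algebra_simps)
  have "integral\<^sup>L M (s n) = ((\<integral>\<omega>. \<bar>Z \<omega>\<bar> powr p \<partial>M) - (\<integral>\<omega>. \<bar>Z \<omega> - b n * Y \<omega>\<bar> powr p \<partial>M)) / b n"
    unfolding s_def using intZp iZb by simp
  moreover have "F 1 = (\<integral>\<omega>. \<bar>Z \<omega>\<bar> powr p \<partial>M)" by (simp add: F_def)
  moreover have "F (1 - b n) = (\<integral>\<omega>. \<bar>Z \<omega> - b n * Y \<omega>\<bar> powr p \<partial>M)"
  proof -
    have "\<bar>X \<omega> - (1 - b n) * (X \<omega> + Z \<omega>)\<bar> = \<bar>Z \<omega> - b n * Y \<omega>\<bar>" for \<omega>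
      by (simp add: Y_def algebra_simps abs_minus_commute)
    then show ?thesis by (simp add: F_def)
  qed
  ultimately have "F (1 - b n) < F 1" using n b[of n] by (simp add: zero_less_divide_iff)
  then show ?thesis using b[of n] by blast
qed


lemma main: "\<exists>a0\<in>{0..<1}. \<forall>a. F a0 \<le> F a"
proof -
  obtain a0 where a0: "a0 \<in> {0..1}" "\<And>y. y \<in> {0..1} \<Longrightarrow> F a0 \<le> F y"
    using continuous_attains_inf[of "{0..1::real}" F] continuous_on_subset[OF F_cont] by auto
  obtain b where b: "0 < b" "b \<le> 1" "F (1 - b) < F 1" using F_strict by blast
  have "a0 \<noteq> 1"
  proof
    assume "a0 = 1"
    then have "F 1 \<le> F (1 - b)" using a0(2)[of "1 - b"] b by auto
    then show False using b by simp
  qed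
  with a0 have a01: "0 \<le> a0" "a0 < 1" by auto
  have "F a0 \<le> F a" for a
  proof (cases "a < 0")
    case True
    then show ?thesis using F_neg[OF True] a0(2)[of 0] by simp
  next
    case False
    show ?thesis
    proof (cases "a \<le> 1")
      case True
      then show ?thesis using False a0(2) by simp
    next
      case a1: False
      show ?thesis
      proof (rule ccontr)
        assume less: "\<not> F a0 \<le> F a"
        define t where "t = (1 - a0) / (a - a0)"
        have t: "0 < t" "t < 1" using a01 a1 by (auto simp: t_def field_simps)
        have "t * (a - a0) = 1 - a0" using a01 a1 by (simp add: t_def)
        then have "(1 - t) *\<^sub>R a0 + t *\<^sub>R a = 1"
          by (simp add: algebra_simps)
        then have "F 1 \<le> (1 - t) * F a0 + t * F a"
          using convex_onD[OF F_convex, of t a0 a] t by simp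
        also have "\<dots> < (1 - t) * F a0 + t * F a0"
          using less t by simp
        finally have "F 1 < F a0" by (simp add: algebra_simps)
        then show False using a0(2)[of 1] by simp
      qed
    qed
  qed
  then show ?thesis using a01 by (intro bexI[of _ a0]) auto
qed

end

theorem theorem1:
  fixes M :: "'s measure" and X Z :: "'s \<Rightarrow> real" and p :: real
  assumes "prob_space M"
    and "X \<in> borel_measurable M"
    and "distributed M lborel Z std_normal_density"
    and "prob_space.indep_var M borel X borel Z"
    and "p \<ge> 1"
    and "integrable M (\<lambda>\<omega>. \<bar>X \<omega>\<bar> powr p)"
  shows "\<exists>a0 \<in> {0..<1}. \<forall>a::real.
           (\<integral>\<^sup>+ \<omega>. ennreal (\<bar>X \<omega> - a0 * (X \<omega> + Z \<omega>)\<bar> powr p) \<partial>M)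
         \<le> (\<integral>\<^sup>+ \<omega>. ennreal (\<bar>X \<omega> - a * (X \<omega> + Z \<omega>)\<bar> powr p) \<partial>M)"
proof -
  interpret T: thm_setup M X Z p
    using assms by (simp add: thm_setup_def thm_setup_axioms_def)
  obtain a0 where a0: "a0 \<in> {0..<1}" "\<And>a. T.F a0 \<le> T.F a" using T.main by blast
  have eq: "(\<integral>\<^sup>+ \<omega>. ennreal (\<bar>X \<omega> - a * (X \<omega> + Z \<omega>)\<bar> powr p) \<partial>M) = ennreal (T.F a)" for a
    unfolding T.F_def by (rule nn_integral_eq_integral[OF T.intF]) simp
  show ?thesis
    using a0 by (auto simp: eq intro!: bexI[of _ a0] ennreal_leI)
qed

end
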